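(* Let $(M,\Sigma)$ be a measurable space, $r\ge1$, and $\mu_1,\dots,\mu_r$ non-atomic countably additive finite measures on $\Sigma$. Let $(H_k)_{k\ge1}$ be measurable sets and $(h_k)_{k\ge1}$ indices in $\{1,\dots,r\}$ such that for every $k$: $H_k\subseteq M\setminus\bigcup_{i=1}^{k-1}H_i$, $H_k$ has a gentleman's solution (a partition $H_k=F_1\sqcup\dots\sqcup F_r$ with $\mu_i(F_i)\le\mu_i(F_j)$ for all $i,j$), and $\mu_{h_k}(H_k)\ge 2^{-(r-1)}\mu_{h_k}\bigl(M\setminus\bigcup_{i=1}^{k-1}H_i\bigr)$. Let $\ell\in\{1,\dots,r\}$ be an index with $h_k=\ell$ for infinitely many $k$, and let $k_1<k_2<\dots$ be all indices $k$ with $h_k=\ell$. Then for every $n\ge1$, $$\mu_\ell\Bigl(M\setminus\bigsqcup_{i=1}^{k_n}H_i\Bigr)\le\Bigl(\frac{2^{r-1}-1}{2^{r-1}}\Bigr)^{n}\mu_\ell(M).$$ *)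

theory Defs
  imports "HOL-Analysis.Analysis" "HOL-Probability.Probability"
begin

definition nonatomic :: "'a measure \<Rightarrow> bool" where
  "nonatomic \<mu> \<longleftrightarrow> (\<forall>A\<in>sets \<mu>. emeasure \<mu> A > 0 \<longrightarrow>
      (\<exists>B\<in>sets \<mu>. B \<subseteq> A \<and> 0 < emeasure \<mu> B \<and> emeasure \<mu> B < emeasure \<mu> A))"

definition gentleman_solution :: "nat \<Rightarrow> (nat \<Rightarrow> 'a measure) \<Rightarrow> 'a set \<Rightarrow> (nat \<Rightarrow> 'a set) \<Rightarrow> bool" where
  "gentleman_solution r \<mu> H F \<longleftrightarrow>
     (\<forall>i\<in>{1..r}. F i \<in> sets (\<mu> i)) \<and>
     (\<Union>i\<in>{1..r}. F i) = H \<and>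
     (\<forall>i\<in>{1..r}. \<forall>j\<in>{1..r}. i \<noteq> j \<longrightarrow> F i \<inter> F j = {}) \<and>
     (\<forall>i\<in>{1..r}. \<forall>j\<in>{1..r}. measure (\<mu> i) (F i) \<le> measure (\<mu> i) (F j))"

definition has_gentleman_solution :: "nat \<Rightarrow> (nat \<Rightarrow> 'a measure) \<Rightarrow> 'a set \<Rightarrow> bool" where
  "has_gentleman_solution r \<mu> H \<longleftrightarrow> (\<exists>F. gentleman_solution r \<mu> H F)"

end

theory Submission
  imports Defs
begin

theorem lemma11:
  fixes M :: "'a set" and \<Sigma> :: "'a set set" and r :: nat
    and \<mu> :: "nat \<Rightarrow> 'a measure"
    and H :: "nat \<Rightarrow> 'a set" and h :: "nat \<Rightarrow> nat"
    and l :: nat and n :: nat and kk :: "nat \<Rightarrow> nat"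
  assumes sa: "sigma_algebra M \<Sigma>"
    and r: "r \<ge> 1"
    and space: "\<And>i. i \<in> {1..r} \<Longrightarrow> space (\<mu> i) = M"
    and sets: "\<And>i. i \<in> {1..r} \<Longrightarrow> sets (\<mu> i) = \<Sigma>"
    and fin: "\<And>i. i \<in> {1..r} \<Longrightarrow> finite_measure (\<mu> i)"
    and na: "\<And>i. i \<in> {1..r} \<Longrightarrow> nonatomic (\<mu> i)"
    and Hmeas: "\<And>k. k \<ge> 1 \<Longrightarrow> H k \<in> \<Sigma>"
    and hrange: "\<And>k. k \<ge> 1 \<Longrightarrow> h k \<in> {1..r}"
    and Hsub: "\<And>k. k \<ge> 1 \<Longrightarrow> H k \<subseteq> M - (\<Union>i\<in>{1..<k}. H i)"
    and Hgent: "\<And>k. k \<ge> 1 \<Longrightarrow> has_gentleman_solution r \<mu> (H k)"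
    and Hbig: "\<And>k. k \<ge> 1 \<Longrightarrow>
       measure (\<mu> (h k)) (H k) \<ge> measure (\<mu> (h k)) (M - (\<Union>i\<in>{1..<k}. H i)) / 2 ^ (r - 1)"
    and hl: "l \<in> {1..r}"
    and inf: "infinite {k. k \<ge> 1 \<and> h k = l}"
    and kk_mono: "strict_mono_on {1..} kk"
    and kk_range: "kk ` {1..} = {k. k \<ge> 1 \<and> h k = l}"
    and n: "n \<ge> 1"
  shows "measure (\<mu> l) (M - (\<Union>i\<in>{1..kk n}. H i))
           \<le> ((2 ^ (r - 1) - 1) / 2 ^ (r - 1)) ^ n * measure (\<mu> l) M"
proof -
  define N where "N = \<mu> l"
  define c :: real where "c = (2 ^ (r - 1) - 1) / 2 ^ (r - 1)"
  define R where "R k = M - (\<Union>i\<in>{1..<k}. H i)" for k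
  interpret N: finite_measure N using fin hl N_def by simp
  have sN: "sets N = \<Sigma>" and spN: "space N = M" using sets space hl N_def by auto
  have Rm: "R k \<in> sets N" for k
  proof -
    have "(\<Union>i\<in>{1..<k}. H i) \<in> sets N" using Hmeas sN by (intro sets.finite_UN) auto
    then show ?thesis unfolding R_def using spN sets.compl_sets by metis
  qed
  have c0: "c \<ge> 0" unfolding c_def by (simp add: one_le_power)
  have anti: "measure N (R k') \<le> measure N (R k)" if "k \<le> k'" for k k'
    using that Rm by (intro N.finite_measure_mono) (auto simp: R_def)
  have RS: "R (Suc k) = R k - H k" if "k \<ge> 1" for k
    using that by (auto simp: R_def less_Suc_eq)
  have stepl: "measure N (R (Suc k)) \<le> c * measure N (R k)" if "k \<ge> 1" "h k = l" for k
  proof -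
    have "measure N (R (Suc k)) = measure N (R k) - measure N (H k)"
      using RS[OF that(1)] Rm Hmeas[OF that(1)] sN Hsub[OF that(1)]
      by (simp add: N.finite_measure_Diff R_def)
    moreover have "measure N (H k) \<ge> measure N (R k) / 2 ^ (r - 1)"
      using Hbig[OF that(1)] that(2) by (simp add: N_def R_def)
    ultimately show ?thesis unfolding c_def by (simp add: diff_divide_distrib left_diff_distrib)
  qed
  have kkin: "kk m \<ge> 1 \<and> h (kk m) = l" if "m \<ge> 1" for m
    using kk_range that by blast
  have kkS: "kk (Suc m) \<ge> Suc (kk m)" if "m \<ge> 1" for m
    using kk_mono that unfolding strict_mono_on_def by (simp add: Suc_le_eq)
  have main: "measure N (R (Suc (kk m))) \<le> c ^ m * measure N M" if "m \<ge> 1" for m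
    using that
  proof (induction m rule: dec_induct)
    case base
    have "measure N (R (Suc (kk 1))) \<le> c * measure N (R (kk 1))"
      using kkin[of 1] stepl by simp
    also have "\<dots> \<le> c * measure N (R 1)"
      using kkin[of 1] anti c0 by (simp add: mult_left_mono)
    finally show ?case by (simp add: R_def)
  next
    case (step m)
    have "measure N (R (Suc (kk (Suc m)))) \<le> c * measure N (R (kk (Suc m)))"
      using kkin[of "Suc m"] stepl by simp
    also have "\<dots> \<le> c * measure N (R (Suc (kk m)))"
      using kkS[of m] step.hyps anti c0 by (simp add: mult_left_mono)
    also have "\<dots> \<le> c * (c ^ m * measure N M)"
      using step.IH c0 by (simp add: mult_left_mono)
    finally show ?case by simp
  qed
  have "R (Suc (kk n)) = M - (\<Union>i\<in>{1..kk n}. H i)"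
    unfolding R_def by (simp add: atLeastLessThanSuc_atLeastAtMost)
  then show ?thesis using main[OF n] unfolding N_def c_def by simp
qed

end
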